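(* Let $B$ satisfy the standing assumptions below. Given $\xi_0\in\mathcal{M}$, set $R=2|\xi_0|_{\mathcal{M}}$. Then there exists $T_R^0>0$, depending only on $R$, such that, with $T=T_R^0$, the map $\Gamma$ satisfies $\Gamma(B_R)\subset B_R$, where $B_R$ is the set of all $\xi=(\xi_t)_{t\in[0,T]}\in C([0,T];\mathcal{M})$ with $\sup_{t\in[0,T]}|\xi_t|_{\mathcal{M}}\le R$. The same holds if $B_R$ is instead defined as the set of $\xi\in C([0,T];\mathcal{M}_w)$ with $\sup_{t\in[0,T]}\|\xi_t\|\le R$.
   Context: $\mathcal{M}$ is the dual of $C_b(\mathbb{R}^d;\mathbb{R}^d)$ (bounded continuous vector fields, sup norm $\|\cdot\|_\infty$) with dual norm $|\xi|_{\mathcal{M}}=\sup_{\|\theta\|_\infty\le1}|\xi(\theta)|$. Weak norm: $\|\xi\|=\sup\{\xi(\theta):\|\theta\|_\infty+\mathrm{Lip}(\theta)\le1\}$; $\mathcal{M}_w$ is $\mathcal{M}$ with metric $d(\xi,\xi')=\|\xi-\xi'\|$. Standing assumptions: $B:\mathcal{M}_w\to C_b^2(\mathbb{R}^d,\mathbb{R}^d)$ is continuous and there is $C_B>0$ with, for all $\xi,\xi'$: $\|B(\xi)\|_{C_b^2}\le C_B(\|\xi\|+1)$, $\|B(\xi)-B(\xi')\|_\infty\le C_B\|\xi-\xi'\|$, $\|DB(\xi)-DB(\xi')\|_\infty\le C_B\|\xi-\xi'\|$ ($D$ the spatial derivative, $\|\cdot\|_{C^2_b}$ the sum of sup norms of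 the field and its first two derivatives). For $\xi\in C([0,T];\mathcal{M}_w)$, $\varphi^{t,B(\xi)}$ is the flow of $\frac{dx_t}{dt}=B(\xi_t)(x_t)$ with $\varphi^{0,B(\xi)}=\mathrm{id}$. Push-forward: for a $C^1$ map $\varphi$, $(\varphi_\sharp\theta)(x)=D\varphi(x)^T\theta(\varphi(x))$ and $(\varphi_\sharp\xi)(\theta)=\xi(\varphi_\sharp\theta)$. The map $\Gamma$ sends $\xi\in C([0,T];\mathcal{M}_w)$ to $\Gamma(\xi)=(\eta_t)_{t\in[0,T]}$ with $\eta_t=\varphi^{t,B(\xi)}_\sharp\xi_0$. *)

theory Defs
  imports "HOL-Analysis.Analysis"
begin

text \<open>Bounded continuous vector fields on R^d with the sup norm; M is the space of bounded linear functionals on them, with the dual norm.\<close>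



type_synonym 'd meas = "((real^'d) \<Rightarrow>\<^sub>C (real^'d)) \<Rightarrow>\<^sub>L real"

definition weak_norm :: "('d::finite) meas \<Rightarrow> real" where
  "weak_norm \<xi> = (SUP \<theta> \<in> {\<theta>. \<exists>L. L-lipschitz_on UNIV (apply_bcontfun \<theta>) \<and> norm \<theta> + L \<le> 1}.
                      blinfun_apply \<xi> \<theta>)"

definition supn :: "(real^'d \<Rightarrow> 'b::real_normed_vector) \<Rightarrow> real" where
  "supn f = (SUP x. norm (f x))"

definition standing :: "(('d::finite) meas \<Rightarrow> real^'d \<Rightarrow> real^'d) \<Rightarrow> bool" where
  "standing B \<longleftrightarrow> (\<exists>C\<^sub>B DB D2B.
     C\<^sub>B > 0 \<and>
     (\<forall>\<xi> x. (B \<xi> has_derivative blinfun_apply (DB \<xi> x)) (at x)) \<and>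
     (\<forall>\<xi> x. (DB \<xi> has_derivative blinfun_apply (D2B \<xi> x)) (at x)) \<and>
     (\<forall>\<xi>. continuous_on UNIV (D2B \<xi>)) \<and>
     (\<forall>\<xi>. bounded (range (B \<xi>)) \<and> bounded (range (DB \<xi>)) \<and> bounded (range (D2B \<xi>))) \<and>
     (\<forall>\<xi>. supn (B \<xi>) + supn (DB \<xi>) + supn (D2B \<xi>) \<le> C\<^sub>B * (weak_norm \<xi> + 1)) \<and>
     (\<forall>\<xi> \<xi>'. supn (\<lambda>x. B \<xi> x - B \<xi>' x) \<le> C\<^sub>B * weak_norm (\<xi> - \<xi>')) \<and>
     (\<forall>\<xi> \<xi>'. supn (\<lambda>x. DB \<xi> x - DB \<xi>' x) \<le> C\<^sub>B * weak_norm (\<xi> - \<xi>')) \<and>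
     (\<forall>\<xi> \<epsilon>. \<epsilon> > 0 \<longrightarrow> (\<exists>\<delta>>0. \<forall>\<xi>'. weak_norm (\<xi>' - \<xi>) < \<delta> \<longrightarrow>
          supn (\<lambda>x. B \<xi>' x - B \<xi> x) + supn (\<lambda>x. DB \<xi>' x - DB \<xi> x)
            + supn (\<lambda>x. D2B \<xi>' x - D2B \<xi> x) < \<epsilon>)))"

definition weak_cont :: "real \<Rightarrow> (real \<Rightarrow> ('d::finite) meas) \<Rightarrow> bool" where
  "weak_cont T \<xi> \<longleftrightarrow> (\<forall>t\<in>{0..T}. \<forall>\<epsilon>>0. \<exists>\<delta>>0. \<forall>s\<in>{0..T}.
       \<bar>s - t\<bar> < \<delta> \<longrightarrow> weak_norm (\<xi> s - \<xi> t) < \<epsilon>)"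

definition is_flow :: "(('d::finite) meas \<Rightarrow> real^'d \<Rightarrow> real^'d) \<Rightarrow> (real \<Rightarrow> 'd meas) \<Rightarrow> real
     \<Rightarrow> (real \<Rightarrow> real^'d \<Rightarrow> real^'d) \<Rightarrow> bool" where
  "is_flow B \<xi> T \<phi> \<longleftrightarrow> (\<forall>x. \<phi> 0 x = x \<and>
     (\<forall>t\<in>{0..T}. ((\<lambda>s. \<phi> s x) has_vector_derivative B (\<xi> t) (\<phi> t x)) (at t within {0..T})))"

definition flow :: "(('d::finite) meas \<Rightarrow> real^'d \<Rightarrow> real^'d) \<Rightarrow> (real \<Rightarrow> 'd meas) \<Rightarrow> real
     \<Rightarrow> real \<Rightarrow> real^'d \<Rightarrow> real^'d" where
  "flow B \<xi> T = (SOME \<phi>. is_flow B \<xi> T \<phi>)"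

definition push_field :: "(real^'d \<Rightarrow> real^'d) \<Rightarrow> ((real^'d) \<Rightarrow>\<^sub>C (real^'d)) \<Rightarrow> ((real^'d::finite) \<Rightarrow>\<^sub>C (real^'d))" where
  "push_field \<phi> \<theta> = Bcontfun (\<lambda>x. transpose (jacobian \<phi> (at x)) *v apply_bcontfun \<theta> (\<phi> x))"

definition push_meas :: "(real^'d \<Rightarrow> real^'d) \<Rightarrow> ('d::finite) meas \<Rightarrow> 'd meas" where
  "push_meas \<phi> \<xi> = Blinfun (\<lambda>\<theta>. blinfun_apply \<xi> (push_field \<phi> \<theta>))"

definition Gamma :: "(('d::finite) meas \<Rightarrow> real^'d \<Rightarrow> real^'d) \<Rightarrow> real \<Rightarrow> 'd meas
     \<Rightarrow> (real \<Rightarrow> 'd meas) \<Rightarrow> real \<Rightarrow> 'd meas" where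
  "Gamma B T \<xi>0 \<xi> = (\<lambda>t. push_meas (flow B \<xi> T t) \<xi>0)"

text \<open>Balls: curves in C([0,T];M_w) bounded by R in |.|_M (strong) resp. in the weak norm.\<close>
definition ball_strong :: "real \<Rightarrow> real \<Rightarrow> (real \<Rightarrow> ('d::finite) meas) \<Rightarrow> bool" where
  "ball_strong T R \<xi> \<longleftrightarrow> weak_cont T \<xi> \<and> (\<forall>t\<in>{0..T}. norm (\<xi> t) \<le> R)"

definition ball_weak :: "real \<Rightarrow> real \<Rightarrow> (real \<Rightarrow> ('d::finite) meas) \<Rightarrow> bool" where
  "ball_weak T R \<xi> \<longleftrightarrow> weak_cont T \<xi> \<and> (\<forall>t\<in>{0..T}. weak_norm (\<xi> t) \<le> R)"

end

theory Submission
  imports Defs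
begin


lemma clamp_real_in: "0 \<le> (T::real) \<Longrightarrow> clamp 0 T t \<in> {0..T}"
  using clamp_in_interval[of 0 T t] by (simp add: cbox_interval)

lemma clamp_real_id: "t \<in> {0..(T::real)} \<Longrightarrow> clamp 0 T t = t"
  using clamp_cancel_cbox[of t 0 T] by (simp add: cbox_interval)

lemma ext_bcont:
  fixes g :: "real \<Rightarrow> 'a::metric_space"
  assumes "continuous_on {0..T} g"
  shows "(\<lambda>t. g (clamp 0 T t)) \<in> bcontfun"
proof -
  obtain h :: "real \<Rightarrow>\<^sub>C 'a" where "\<And>x. h x = g (clamp 0 T x)"
    using continuous_on_cbox_bcontfunE[of 0 T g] assms by (auto simp: cbox_interval)
  then have "(\<lambda>t. g (clamp 0 T t)) = apply_bcontfun h" by auto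
  then show ?thesis using apply_bcontfun by metis
qed

lemma sup_trick:
  fixes g :: "real \<Rightarrow> 'a::real_normed_vector"
  assumes "continuous_on {0..T} g" "0 \<le> T"
    and H: "\<And>S t. (\<And>s. s\<in>{0..T} \<Longrightarrow> norm (g s) \<le> S) \<Longrightarrow> t \<in> {0..T} \<Longrightarrow> norm (g t) \<le> a + S/2"
    and t: "t \<in> {0..T}"
  shows "norm (g t) \<le> 2*a"
proof -
  have "compact ((\<lambda>s. norm (g s)) ` {0..T})"
    by (intro compact_continuous_image continuous_intros assms) auto
  moreover have "(\<lambda>s. norm (g s)) ` {0..T} \<noteq> {}" using assms by auto
  ultimately obtain S where S: "S \<in> (\<lambda>s. norm (g s)) ` {0..T}" "\<forall>u\<in>(\<lambda>s. norm (g s)) ` {0..T}. u \<le> S"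
    using compact_attains_sup by blast
  then obtain s0 where s0: "s0 \<in> {0..T}" "S = norm (g s0)" by auto
  have b: "\<And>s. s\<in>{0..T} \<Longrightarrow> norm (g s) \<le> S" using S by auto
  have "S \<le> a + S/2" using H[OF b s0(1)] s0 by simp
  then have "S \<le> 2*a" by simp
  then show ?thesis using b[OF t] by simp
qed

lemma int_cont:
  fixes f :: "real \<Rightarrow> 'a::banach"
  assumes "continuous_on {0..T} f"
  shows "continuous_on {0..T} (\<lambda>t. integral {0..t} f)"
  by (rule indefinite_integral_continuous_1) (rule integrable_continuous_interval[OF assms])

lemma int_bound:
  fixes f :: "real \<Rightarrow> 'a::banach"
  assumes "continuous_on {0..T} f" "t \<in> {0..T}" "\<And>s. s \<in> {0..t} \<Longrightarrow> norm (f s) \<le> c"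
  shows "norm (integral {0..t} f) \<le> c * t"
proof -
  have "continuous_on {0..t} f" using assms(2) by (intro continuous_on_subset[OF assms(1)]) auto
  then show ?thesis using integral_bound[of 0 t f c] assms by auto
qed

lemma int_diff:
  fixes f g :: "real \<Rightarrow> 'a::banach"
  assumes "continuous_on {0..T} f" "continuous_on {0..T} g" "t \<in> {0..T}"
  shows "integral {0..t} f - integral {0..t} g = integral {0..t} (\<lambda>s. f s - g s)"
proof -
  have "continuous_on {0..t} f" "continuous_on {0..t} g" using assms
    by (auto intro: continuous_on_subset)
  then show ?thesis
    by (intro integral_diff[symmetric] integrable_continuous_interval)
qed

lemma int_split:
  fixes f :: "real \<Rightarrow> 'a::banach"
  assumes "continuous_on {0..T} f" "s \<in> {0..T}" "t \<in> {0..T}" "s \<le> t"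
  shows "integral {0..t} f - integral {0..s} f = integral {s..t} f"
proof -
  have "continuous_on {0..t} f" using assms by (auto intro: continuous_on_subset)
  then have "integral {0..s} f + integral {s..t} f = integral {0..t} f"
    using assms Henstock_Kurzweil_Integration.integral_combine[of 0 s t f] integrable_continuous_interval[OF \<open>continuous_on {0..t} f\<close>] by auto
  then show ?thesis by (simp add: algebra_simps)
qed

lemma int_bound2:
  fixes f :: "real \<Rightarrow> 'a::banach"
  assumes "continuous_on {0..T} f" "s \<in> {0..T}" "t \<in> {0..T}" "\<And>u. u \<in> {0..T} \<Longrightarrow> norm (f u) \<le> c"
  shows "norm (integral {0..t} f - integral {0..s} f) \<le> c * \<bar>t - s\<bar>"
proof (cases "s \<le> t")
  case True
  have "continuous_on {s..t} f" using assms by (auto intro: continuous_on_subset)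
  then have "norm (integral {s..t} f) \<le> c * (t - s)"
    using integral_bound[of s t f c] assms True by auto
  then show ?thesis using int_split[OF assms(1-3) True] True by simp
next
  case False
  have "continuous_on {t..s} f" using assms by (auto intro: continuous_on_subset)
  then have "norm (integral {t..s} f) \<le> c * (s - t)"
    using integral_bound[of t s f c] assms False by auto
  then show ?thesis using int_split[OF assms(1,3,2)] False by (simp add: norm_minus_commute)
qed

lemma picard_exists:
  fixes F :: "real \<Rightarrow> 'a::banach \<Rightarrow> 'a" and y0 :: 'a
  assumes T: "0 \<le> T" and L: "0 \<le> L" "L*T \<le> 1/2"
    and lip: "\<And>s u v. s \<in> {0..T} \<Longrightarrow> norm (F s u - F s v) \<le> L * norm (u - v)"
    and cont: "\<And>y. continuous_on {0..T} y \<Longrightarrow> continuous_on {0..T} (\<lambda>s. F s (y s))"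
  shows "\<exists>y. continuous_on {0..T} y \<and> (\<forall>t\<in>{0..T}. y t = y0 + integral {0..t} (\<lambda>s. F s (y s)))"
proof -
  define h where "h g t = y0 + integral {0..t} (\<lambda>s. F s (g s))" for g :: "real \<Rightarrow> 'a" and t
  have hc: "continuous_on {0..T} (h g)" if "continuous_on {0..T} g" for g
    unfolding h_def by (intro continuous_intros int_cont cont that)
  define P where "P g = Bcontfun (\<lambda>t. h (apply_bcontfun g) (clamp 0 T t))" for g :: "real \<Rightarrow>\<^sub>C 'a"
  have Pa: "apply_bcontfun (P g) = (\<lambda>t. h (apply_bcontfun g) (clamp 0 T t))" for g
    unfolding P_def by (intro Bcontfun_inverse ext_bcont hc) auto
  have contr: "dist (P g1) (P g2) \<le> (1/2) * dist g1 g2" for g1 g2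
  proof (rule dist_bound)
    fix t
    let ?c = "clamp 0 T t"
    have c: "?c \<in> {0..T}" using clamp_real_in[OF T] .
    have c1: "continuous_on {0..T} (\<lambda>s. F s (apply_bcontfun g1 s))"
      "continuous_on {0..T} (\<lambda>s. F s (apply_bcontfun g2 s))" by (auto intro!: cont)
    have "dist (P g1 t) (P g2 t) = norm (integral {0..?c} (\<lambda>s. F s (g1 s)) - integral {0..?c} (\<lambda>s. F s (g2 s)))"
      by (simp add: Pa h_def dist_norm)
    also have "\<dots> = norm (integral {0..?c} (\<lambda>s. F s (g1 s) - F s (g2 s)))"
      using int_diff[OF c1 c] by simp
    also have "\<dots> \<le> (L * dist g1 g2) * ?c"
    proof (rule int_bound[OF _ c])
      show "continuous_on {0..T} (\<lambda>s. F s (g1 s) - F s (g2 s))" using c1 by (intro continuous_intros)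
      fix s assume "s \<in> {0..?c}"
      then have s: "s \<in> {0..T}" using c by auto
      have "norm (F s (g1 s) - F s (g2 s)) \<le> L * norm (g1 s - g2 s)" using lip[OF s] .
      also have "\<dots> \<le> L * dist g1 g2" using dist_bounded[of g1 s g2] L by (intro mult_left_mono) (auto simp: dist_norm)
      finally show "norm (F s (g1 s) - F s (g2 s)) \<le> L * dist g1 g2" .
    qed
    also have "\<dots> \<le> (L * dist g1 g2) * T" using c L by (intro mult_left_mono) auto
    also have "\<dots> \<le> (1/2) * dist g1 g2" using L
      by (metis mult.commute mult.left_commute mult_right_mono zero_le_dist)
    finally show "dist (P g1 t) (P g2 t) \<le> (1/2) * dist g1 g2" .
  qed
  obtain g where g: "P g = g" using banach_fix_type[of "1/2" P] contr by auto
  show ?thesis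
  proof (intro exI conjI ballI)
    show "continuous_on {0..T} (apply_bcontfun g)" by auto
    fix t assume t: "t \<in> {0..T}"
    have "g t = P g t" using g by simp
    also have "\<dots> = h g t" using t by (simp add: Pa clamp_real_id)
    finally show "g t = y0 + integral {0..t} (\<lambda>s. F s (g s))" by (simp add: h_def)
  qed
qed

lemma picard_unique:
  fixes F :: "real \<Rightarrow> 'a::banach \<Rightarrow> 'a" and y0 :: 'a
  assumes T: "0 \<le> T" and L: "0 \<le> L" "L*T \<le> 1/2"
    and lip: "\<And>s u v. s \<in> {0..T} \<Longrightarrow> norm (F s u - F s v) \<le> L * norm (u - v)"
    and cont: "\<And>y. continuous_on {0..T} y \<Longrightarrow> continuous_on {0..T} (\<lambda>s. F s (y s))"
    and y: "continuous_on {0..T} y" "\<And>t. t\<in>{0..T} \<Longrightarrow> y t = y0 + integral {0..t} (\<lambda>s. F s (y s))"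
    and z: "continuous_on {0..T} z" "\<And>t. t\<in>{0..T} \<Longrightarrow> z t = y0 + integral {0..t} (\<lambda>s. F s (z s))"
    and t: "t \<in> {0..T}"
  shows "y t = z t"
proof -
  have "norm (y t - z t) \<le> 2 * 0"
  proof (rule sup_trick[OF _ T _ t])
    show "continuous_on {0..T} (\<lambda>t. y t - z t)" using y z by (intro continuous_intros)
    fix S t assume S: "\<And>s. s \<in> {0..T} \<Longrightarrow> norm (y s - z s) \<le> S" and t: "t \<in> {0..T}"
    have S0: "0 \<le> S" using S[of 0] T by (auto intro: order_trans[OF norm_ge_zero])
    have "norm (y t - z t) = norm (integral {0..t} (\<lambda>s. F s (y s)) - integral {0..t} (\<lambda>s. F s (z s)))"
      using y(2)[OF t] z(2)[OF t] by simp
    also have "\<dots> = norm (integral {0..t} (\<lambda>s. F s (y s) - F s (z s)))"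
      using int_diff[OF cont[OF y(1)] cont[OF z(1)] t] by simp
    also have "\<dots> \<le> (L * S) * t"
    proof (rule int_bound[OF _ t])
      show "continuous_on {0..T} (\<lambda>s. F s (y s) - F s (z s))" using cont y z by (intro continuous_intros)
      fix s assume "s \<in> {0..t}"
      then have s: "s \<in> {0..T}" using t by auto
      show "norm (F s (y s) - F s (z s)) \<le> L * S"
        using lip[OF s, of "y s" "z s"] S[OF s] L by (meson mult_left_mono order_trans)
    qed
    also have "\<dots> \<le> (L * S) * T" using t L S0 by (intro mult_left_mono) auto
    also have "\<dots> \<le> 0 + S/2" using L S0
      by (metis add_0 mult.commute mult.left_commute mult_left_mono divide_inverse mult.right_neutral
          inverse_eq_divide times_divide_eq_right)
    finally show "norm (y t - z t) \<le> 0 + S/2" .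
  qed
  then show ?thesis by simp
qed



lemma cont_comp:
  fixes G :: "real \<Rightarrow> 'a::real_normed_vector \<Rightarrow> 'b::real_normed_vector"
  assumes K: "0 \<le> K"
    and lip: "\<And>s u v. s \<in> S \<Longrightarrow> norm (G s u - G s v) \<le> K * norm (u - v)"
    and uc: "\<And>s0 e. s0 \<in> S \<Longrightarrow> e > 0 \<Longrightarrow> \<exists>d>0. \<forall>s\<in>S. \<bar>s - s0\<bar> < d \<longrightarrow> (\<forall>u. norm (G s u - G s0 u) \<le> e)"
    and y: "continuous_on S y"
  shows "continuous_on S (\<lambda>s. G s (y s))"
  unfolding continuous_on_iff
proof (intro ballI allI impI)
  fix s0 e assume s0: "s0 \<in> S" and e: "(0::real) < e"
  obtain d1 where d1: "d1 > 0" "\<forall>s\<in>S. \<bar>s - s0\<bar> < d1 \<longrightarrow> (\<forall>u. norm (G s u - G s0 u) \<le> e/2)"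
    using uc[OF s0, of "e/2"] e by auto
  obtain d2 where d2: "d2 > 0" "\<forall>s\<in>S. dist s s0 < d2 \<longrightarrow> dist (y s) (y s0) < e/(2*(K+1))"
    using y s0 e K unfolding continuous_on_iff by (metis divide_pos_pos less_add_same_cancel2 mult_pos_pos zero_less_numeral add_nonneg_pos zero_less_one)
  show "\<exists>d>0. \<forall>s\<in>S. dist s s0 < d \<longrightarrow> dist (G s (y s)) (G s0 (y s0)) < e"
  proof (intro exI[of _ "min d1 d2"] conjI ballI impI)
    show "min d1 d2 > 0" using d1 d2 by auto
    fix s assume s: "s \<in> S" "dist s s0 < min d1 d2"
    have a: "norm (G s (y s) - G s0 (y s)) \<le> e/2" using d1 s by (auto simp: dist_real_def)
    have "norm (G s0 (y s) - G s0 (y s0)) \<le> K * norm (y s - y s0)" using lip[OF s0] .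
    also have "\<dots> \<le> K * (e/(2*(K+1)))" using d2 s K by (intro mult_left_mono) (auto simp: dist_norm)
    also have "\<dots> < e/2" using K e by (simp add: field_simps)
    finally have b: "norm (G s0 (y s) - G s0 (y s0)) < e/2" .
    have "dist (G s (y s)) (G s0 (y s0)) \<le> norm (G s (y s) - G s0 (y s)) + norm (G s0 (y s) - G s0 (y s0))"
      unfolding dist_norm by (rule order_trans[OF _ norm_triangle_ineq]) simp
    then show "dist (G s (y s)) (G s0 (y s0)) < e" using a b by simp
  qed
qed

lemma adj_eq:
  fixes f :: "real^'n \<Rightarrow> real^'n"
  assumes "linear f"
  shows "adjoint f w = (\<chi> i. f (axis i 1) \<bullet> w)"
proof -
  have "(adjoint f w) $ i = f (axis i 1) \<bullet> w" for i
    using adjoint_works[OF assms, of "axis i 1" w] by (simp add: inner_axis' inner_commute)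
  then show ?thesis by (simp add: vec_eq_iff)
qed

lemma adj_norm:
  fixes f :: "real^'n \<Rightarrow> real^'n"
  assumes "linear f" "\<And>v. norm (f v) \<le> c * norm v"
  shows "norm (adjoint f w) \<le> c * norm w"
proof -
  let ?a = "adjoint f w"
  have "norm ?a ^ 2 = ?a \<bullet> ?a" by (simp add: power2_norm_eq_inner)
  also have "\<dots> = f ?a \<bullet> w" using adjoint_works[OF assms(1), of ?a w] by simp
  also have "\<dots> \<le> norm (f ?a) * norm w" using norm_cauchy_schwarz by blast
  also have "\<dots> \<le> (c * norm ?a) * norm w" using assms(2) by (intro mult_right_mono) auto
  finally have *: "norm ?a * norm ?a \<le> norm ?a * (c * norm w)" by (simp add: power2_eq_square algebra_simps)
  show ?thesis
  proof (cases "norm ?a = 0")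
    case True
    have "0 \<le> c * norm w"
    proof (cases "w = 0")
      case False
      show ?thesis using assms(2)[of w] norm_ge_zero[of "f w"] by linarith
    qed simp
    then show ?thesis using True by simp
  next
    case False
    then show ?thesis using * by (simp add: mult_le_cancel_left)
  qed
qed

lemma adj_bl: "adjoint (blinfun_apply (m::(real^'n) \<Rightarrow>\<^sub>L (real^'n))) w = (\<chi> i. m (axis i 1) \<bullet> w)"
  by (rule adj_eq) (simp add: blinfun.bounded_linear_right bounded_linear.linear)

lemma adj_bl_norm: "norm (adjoint (blinfun_apply (m::(real^'n) \<Rightarrow>\<^sub>L (real^'n))) w) \<le> norm m * norm w"
  by (rule adj_norm) (auto simp: blinfun.bounded_linear_right bounded_linear.linear norm_blinfun)

lemma adj_bl_diff:
  "adjoint (blinfun_apply (m::(real^'n) \<Rightarrow>\<^sub>L (real^'n))) w - adjoint (blinfun_apply m') w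
   = adjoint (blinfun_apply (m - m')) w"
  by (simp add: adj_bl vec_eq_iff blinfun.diff_left inner_diff_left)

lemma adj_bl_add:
  "adjoint (blinfun_apply (m::(real^'n) \<Rightarrow>\<^sub>L (real^'n))) (v + w) = adjoint (blinfun_apply m) v + adjoint (blinfun_apply m) w"
  by (simp add: adj_bl vec_eq_iff inner_add_right)

lemma adj_bl_scale:
  "adjoint (blinfun_apply (m::(real^'n) \<Rightarrow>\<^sub>L (real^'n))) (c *\<^sub>R v) = c *\<^sub>R adjoint (blinfun_apply m) v"
  by (simp add: adj_bl vec_eq_iff)

lemma adj_bl_minus:
  "adjoint (blinfun_apply (m::(real^'n) \<Rightarrow>\<^sub>L (real^'n))) v - adjoint (blinfun_apply m) w = adjoint (blinfun_apply m) (v - w)"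
  by (simp add: adj_bl vec_eq_iff inner_diff_right)

lemma transp_jac:
  fixes m :: "(real^'n) \<Rightarrow>\<^sub>L (real^'n)"
  shows "transpose (matrix (blinfun_apply m)) *v w = adjoint (blinfun_apply m) w"
proof -
  have l: "linear (blinfun_apply m)" by (simp add: blinfun.bounded_linear_right bounded_linear.linear)
  have "transpose (matrix (blinfun_apply m)) = matrix (adjoint (blinfun_apply m))"
    using matrix_adjoint[OF l] by simp
  moreover have "linear (adjoint (blinfun_apply m))" using adjoint_linear[OF l] .
  ultimately show ?thesis by (simp add: matrix_works)
qed

lemma second_order:
  fixes f :: "'a::real_normed_vector \<Rightarrow> 'b::real_normed_vector"
  assumes der: "\<And>x. (f has_derivative blinfun_apply (D x)) (at x)"
    and lipD: "\<And>x y. norm (D x - D y) \<le> K * norm (x - y)" and K: "0 \<le> K"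
  shows "norm (f b - f a - D a (b - a)) \<le> K * norm (b - a) ^ 2"
proof -
  let ?S = "cball a (norm (b - a))"
  have "norm (f b - f a - blinfun_apply (D a) (b - a)) \<le> norm (b - a) * (K * norm (b - a))"
  proof (rule differentiable_bound_linearization[where S = ?S and f' = "\<lambda>x. blinfun_apply (D x)"])
    fix t :: real assume "t \<in> {0..1}"
    then show "a + t *\<^sub>R (b - a) \<in> ?S" by (auto simp: dist_norm mult_left_le_one_le)
  next
    fix x assume "x \<in> ?S"
    show "(f has_derivative blinfun_apply (D x)) (at x within ?S)"
      using der by (rule has_derivative_at_withinI)
  next
    fix x assume x: "x \<in> ?S"
    have "onorm (blinfun_apply (D x) - blinfun_apply (D a)) = norm (D x - D a)"
      by (simp add: norm_blinfun.rep_eq minus_blinfun.rep_eq fun_diff_def)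
    also have "\<dots> \<le> K * norm (x - a)" using lipD .
    also have "\<dots> \<le> K * norm (b - a)"
      using x K by (intro mult_left_mono) (auto simp: dist_norm norm_minus_commute)
    finally show "onorm (blinfun_apply (D x) - blinfun_apply (D a)) \<le> K * norm (b - a)" .
  qed auto
  then show ?thesis by (simp add: power2_eq_square algebra_simps)
qed



lemma int_apply:
  fixes f :: "real \<Rightarrow> ('a::real_normed_vector \<Rightarrow>\<^sub>L 'b::banach)"
  assumes "continuous_on {0..T} f" "t \<in> {0..T}"
  shows "blinfun_apply (integral {0..t} f) v = integral {0..t} (\<lambda>s. blinfun_apply (f s) v)"
proof -
  have "continuous_on {0..t} f" using assms(2) by (intro continuous_on_subset[OF assms(1)]) auto
  then have "f integrable_on {0..t}" by (rule integrable_continuous_interval)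
  from integral_linear[OF this, of "\<lambda>m. blinfun_apply m v"]
  show ?thesis by (simp add: blinfun.bounded_linear_left o_def)
qed

locale setting =
  fixes B :: "'d::finite meas \<Rightarrow> real^'d \<Rightarrow> real^'d"
    and DB :: "'d meas \<Rightarrow> real^'d \<Rightarrow> ((real^'d) \<Rightarrow>\<^sub>L (real^'d))"
    and \<xi> :: "real \<Rightarrow> 'd meas" and K T :: real
  assumes K: "0 < K" and T: "0 < T" and KT: "K*T \<le> 1/2"
    and Bb: "\<And>s x. s \<in> {0..T} \<Longrightarrow> norm (B (\<xi> s) x) \<le> K"
    and DBb: "\<And>s x. s \<in> {0..T} \<Longrightarrow> norm (DB (\<xi> s) x) \<le> K"
    and Blip: "\<And>s x y. s \<in> {0..T} \<Longrightarrow> norm (B (\<xi> s) x - B (\<xi> s) y) \<le> K * norm (x - y)"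
    and DBlip: "\<And>s x y. s \<in> {0..T} \<Longrightarrow> norm (DB (\<xi> s) x - DB (\<xi> s) y) \<le> K * norm (x - y)"
    and Bder: "\<And>s x. s \<in> {0..T} \<Longrightarrow> (B (\<xi> s) has_derivative blinfun_apply (DB (\<xi> s) x)) (at x)"
    and Buc: "\<And>s0 e. s0 \<in> {0..T} \<Longrightarrow> e > 0 \<Longrightarrow> \<exists>d>0. \<forall>s\<in>{0..T}. \<bar>s - s0\<bar> < d \<longrightarrow> (\<forall>u. norm (B (\<xi> s) u - B (\<xi> s0) u) \<le> e)"
    and DBuc: "\<And>s0 e. s0 \<in> {0..T} \<Longrightarrow> e > 0 \<Longrightarrow> \<exists>d>0. \<forall>s\<in>{0..T}. \<bar>s - s0\<bar> < d \<longrightarrow> (\<forall>u. norm (DB (\<xi> s) u - DB (\<xi> s0) u) \<le> e)"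
begin

lemma KST: "0 \<le> S \<Longrightarrow> t \<in> {0..T} \<Longrightarrow> (K*S)*t \<le> S/2"
proof -
  assume S: "0 \<le> S" and t: "t \<in> {0..T}"
  have "(K*S)*t \<le> (K*S)*T" using K S t by (intro mult_left_mono) auto
  also have "\<dots> = S*(K*T)" by simp
  also have "\<dots> \<le> S*(1/2)" using KT S by (intro mult_left_mono) auto
  finally show ?thesis by simp
qed

lemma Bc: "continuous_on {0..T} y \<Longrightarrow> continuous_on {0..T} (\<lambda>s. B (\<xi> s) (y s))"
  by (rule cont_comp[where K=K]) (use K Blip Buc in auto)

lemma DBc: "continuous_on {0..T} y \<Longrightarrow> continuous_on {0..T} (\<lambda>s. DB (\<xi> s) (y s))"
  by (rule cont_comp[where K=K]) (use K DBlip DBuc in auto)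

definition "Yprop x y \<longleftrightarrow> continuous_on {0..T} y \<and> (\<forall>t\<in>{0..T}. y t = x + integral {0..t} (\<lambda>s. B (\<xi> s) (y s)))"
definition "Y x = (SOME y. Yprop x y)"

lemma Y_ex: "Yprop x (Y x)"
proof -
  have "\<exists>y. Yprop x y" unfolding Yprop_def
    by (rule picard_exists[where L=K]) (use T K KT Blip Bc in auto)
  then show ?thesis unfolding Y_def by (rule someI_ex)
qed

lemma Y_cont: "continuous_on {0..T} (Y x)" using Y_ex unfolding Yprop_def by auto
lemma Y_eq: "t \<in> {0..T} \<Longrightarrow> Y x t = x + integral {0..t} (\<lambda>s. B (\<xi> s) (Y x s))" using Y_ex unfolding Yprop_def by auto
lemma BYc: "continuous_on {0..T} (\<lambda>s. B (\<xi> s) (Y x s))" by (rule Bc[OF Y_cont])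

lemma Y_unique:
  assumes "continuous_on {0..T} y" "\<And>t. t\<in>{0..T} \<Longrightarrow> y t = x + integral {0..t} (\<lambda>s. B (\<xi> s) (y s))" "t \<in> {0..T}"
  shows "y t = Y x t"
  by (rule picard_unique[where L=K and F="\<lambda>s u. B (\<xi> s) u", OF _ _ KT Blip Bc assms(1,2) Y_cont Y_eq assms(3)])
    (use T K in auto)

definition "A x s = DB (\<xi> s) (Y x s)"
lemma Ac: "continuous_on {0..T} (A x)" unfolding A_def by (rule DBc[OF Y_cont])
lemma Ab: "s \<in> {0..T} \<Longrightarrow> norm (A x s) \<le> K" unfolding A_def by (rule DBb)

lemma comp_lip: "norm ((a o\<^sub>L u) - (a o\<^sub>L v)) \<le> norm a * norm (u - v)"
proof -
  have "(a o\<^sub>L u) - (a o\<^sub>L v) = a o\<^sub>L (u - v)" by (rule blinfun_eqI) (simp add: blinfun.diff_right blinfun.diff_left)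
  then show ?thesis by (simp add: norm_blinfun_compose)
qed

definition "Mprop x m \<longleftrightarrow> continuous_on {0..T} m \<and> (\<forall>t\<in>{0..T}. m t = id_blinfun + integral {0..t} (\<lambda>s. A x s o\<^sub>L m s))"
definition "M x = (SOME m. Mprop x m)"

lemma M_ex: "Mprop x (M x)"
proof -
  have "\<exists>m. Mprop x m" unfolding Mprop_def
  proof (rule picard_exists[where L=K])
    fix s u v assume s: "s \<in> {0..(T::real)}"
    have "norm ((A x s o\<^sub>L u) - (A x s o\<^sub>L v)) \<le> norm (A x s) * norm (u - v)" by (rule comp_lip)
    also have "\<dots> \<le> K * norm (u - v)" using Ab[OF s] by (intro mult_right_mono) auto
    finally show "norm ((A x s o\<^sub>L u) - (A x s o\<^sub>L v)) \<le> K * norm (u - v)" .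
  next
    fix y :: "real \<Rightarrow> ((real^'d) \<Rightarrow>\<^sub>L (real^'d))" assume "continuous_on {0..T} y"
    then show "continuous_on {0..T} (\<lambda>s. A x s o\<^sub>L y s)" using Ac by (intro continuous_intros)
  qed (use T K KT in auto)
  then show ?thesis unfolding M_def by (rule someI_ex)
qed

lemma M_cont: "continuous_on {0..T} (M x)" using M_ex unfolding Mprop_def by auto
lemma M_eq: "t \<in> {0..T} \<Longrightarrow> M x t = id_blinfun + integral {0..t} (\<lambda>s. A x s o\<^sub>L M x s)" using M_ex unfolding Mprop_def by auto
lemma AMc: "continuous_on {0..T} (\<lambda>s. A x s o\<^sub>L M x s)" using Ac M_cont by (intro continuous_intros)

lemma Y_speed: "s \<in> {0..T} \<Longrightarrow> t \<in> {0..T} \<Longrightarrow> norm (Y x t - Y x s) \<le> K * \<bar>t - s\<bar>"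
proof -
  assume s: "s \<in> {0..T}" and t: "t \<in> {0..T}"
  have "norm (integral {0..t} (\<lambda>s. B (\<xi> s) (Y x s)) - integral {0..s} (\<lambda>s. B (\<xi> s) (Y x s))) \<le> K * \<bar>t - s\<bar>"
    by (rule int_bound2[OF BYc s t]) (rule Bb)
  moreover have "Y x t - Y x s = integral {0..t} (\<lambda>s. B (\<xi> s) (Y x s)) - integral {0..s} (\<lambda>s. B (\<xi> s) (Y x s))"
    by (subst Y_eq[OF t], subst Y_eq[OF s]) simp
  ultimately show ?thesis by simp
qed

lemma M_bound: "t \<in> {0..T} \<Longrightarrow> norm (M x t) \<le> 2"
proof -
  assume t: "t \<in> {0..T}"
  have "norm (M x t) \<le> 2 * 1"
  proof (rule sup_trick[OF M_cont _ _ t])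
    fix S t assume S: "\<And>s. s \<in> {0..T} \<Longrightarrow> norm (M x s) \<le> S" and t: "t \<in> {0..T}"
    have S0: "0 \<le> S" using S[of 0] T by (auto intro: order_trans[OF norm_ge_zero])
    have "norm (integral {0..t} (\<lambda>s. A x s o\<^sub>L M x s)) \<le> (K*S) * t"
    proof (rule int_bound[OF AMc t])
      fix s assume "s \<in> {0..t}"
      then have s: "s \<in> {0..T}" using t by auto
      have "norm (A x s o\<^sub>L M x s) \<le> norm (A x s) * norm (M x s)" by (rule norm_blinfun_compose)
      also have "\<dots> \<le> K * S" using Ab[OF s] S[OF s] K by (intro mult_mono) auto
      finally show "norm (A x s o\<^sub>L M x s) \<le> K * S" .
    qed
    also have "\<dots> \<le> S/2" by (rule KST[OF S0 t])
    finally have "norm (integral {0..t} (\<lambda>s. A x s o\<^sub>L M x s)) \<le> S/2" .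
    moreover have "norm (M x t) \<le> norm (id_blinfun::(real^'d) \<Rightarrow>\<^sub>L (real^'d)) + norm (integral {0..t} (\<lambda>s. A x s o\<^sub>L M x s))"
      by (subst M_eq[OF t]) (rule norm_triangle_ineq)
    ultimately show "norm (M x t) \<le> 1 + S/2" using norm_blinfun_id_le[where 'a="real^'d"] by linarith
  qed (use T in auto)
  then show ?thesis by simp
qed

lemma M_speed: "s \<in> {0..T} \<Longrightarrow> t \<in> {0..T} \<Longrightarrow> norm (M x t - M x s) \<le> (2*K) * \<bar>t - s\<bar>"
proof -
  assume s: "s \<in> {0..T}" and t: "t \<in> {0..T}"
  have "norm (integral {0..t} (\<lambda>s. A x s o\<^sub>L M x s) - integral {0..s} (\<lambda>s. A x s o\<^sub>L M x s)) \<le> (2*K) * \<bar>t - s\<bar>"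
  proof (rule int_bound2[OF AMc s t])
    fix u assume u: "u \<in> {0..T}"
    have "norm (A x u o\<^sub>L M x u) \<le> norm (A x u) * norm (M x u)" by (rule norm_blinfun_compose)
    also have "\<dots> \<le> K * 2" using Ab[OF u] M_bound[OF u] K by (intro mult_mono) auto
    finally show "norm (A x u o\<^sub>L M x u) \<le> 2*K" by simp
  qed
  moreover have "M x t - M x s = integral {0..t} (\<lambda>s. A x s o\<^sub>L M x s) - integral {0..s} (\<lambda>s. A x s o\<^sub>L M x s)"
    by (subst M_eq[OF t], subst M_eq[OF s]) simp
  ultimately show ?thesis by simp
qed

end

lemma grp_id: "(a::'a::ab_group_add) - b - c = (a - b - d) + (d - c)" by simp

context setting begin

lemma S_nonneg: "(\<And>s. s \<in> {0..T} \<Longrightarrow> norm (g s) \<le> S) \<Longrightarrow> 0 \<le> S"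
proof -
  assume "\<And>s. s \<in> {0..T} \<Longrightarrow> norm (g s) \<le> S"
  from this[of 0] T show ?thesis by (auto intro: order_trans[OF norm_ge_zero])
qed

lemma Y_lip: "t \<in> {0..T} \<Longrightarrow> norm (Y x t - Y x' t) \<le> 2 * norm (x - x')"
proof -
  assume t: "t \<in> {0..T}"
  show ?thesis
  proof (rule sup_trick[OF _ _ _ t])
    show "continuous_on {0..T} (\<lambda>t. Y x t - Y x' t)" using Y_cont by (intro continuous_intros)
    fix S t assume S: "\<And>s. s \<in> {0..T} \<Longrightarrow> norm (Y x s - Y x' s) \<le> S" and t: "t \<in> {0..T}"
    have S0: "0 \<le> S" by (rule S_nonneg[OF S])
    have "Y x t - Y x' t = (x - x') + (integral {0..t} (\<lambda>s. B (\<xi> s) (Y x s)) - integral {0..t} (\<lambda>s. B (\<xi> s) (Y x' s)))"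
      by (subst Y_eq[OF t], subst Y_eq[OF t]) simp
    also have "\<dots> = (x - x') + integral {0..t} (\<lambda>s. B (\<xi> s) (Y x s) - B (\<xi> s) (Y x' s))"
      by (simp add: int_diff[OF BYc BYc t])
    finally have eq: "Y x t - Y x' t = (x - x') + integral {0..t} (\<lambda>s. B (\<xi> s) (Y x s) - B (\<xi> s) (Y x' s))" .
    have "norm (integral {0..t} (\<lambda>s. B (\<xi> s) (Y x s) - B (\<xi> s) (Y x' s))) \<le> (K*S)*t"
    proof (rule int_bound[OF _ t])
      show "continuous_on {0..T} (\<lambda>s. B (\<xi> s) (Y x s) - B (\<xi> s) (Y x' s))" using BYc by (intro continuous_intros)
      fix s assume "s \<in> {0..t}"
      then have s: "s \<in> {0..T}" using t by auto
      show "norm (B (\<xi> s) (Y x s) - B (\<xi> s) (Y x' s)) \<le> K * S"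
        using Blip[OF s, of "Y x s" "Y x' s"] S[OF s] K by (meson mult_left_mono order_trans less_imp_le)
    qed
    also have "\<dots> \<le> S/2" by (rule KST[OF S0 t])
    finally show "norm (Y x t - Y x' t) \<le> norm (x - x') + S/2" unfolding eq
      by (meson add_left_mono norm_triangle_ineq order_trans)
  qed (use T in auto)
qed

lemma M_lip: "t \<in> {0..T} \<Longrightarrow> norm (M x t - M x' t) \<le> 2 * (2 * norm (x - x'))"
proof -
  assume t: "t \<in> {0..T}"
  show ?thesis
  proof (rule sup_trick[OF _ _ _ t])
    show "continuous_on {0..T} (\<lambda>t. M x t - M x' t)" using M_cont by (intro continuous_intros)
    fix S t assume S: "\<And>s. s \<in> {0..T} \<Longrightarrow> norm (M x s - M x' s) \<le> S" and t: "t \<in> {0..T}"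
    have S0: "0 \<le> S" by (rule S_nonneg[OF S])
    have eq: "M x t - M x' t = integral {0..t} (\<lambda>s. (A x s o\<^sub>L M x s) - (A x' s o\<^sub>L M x' s))"
      by (subst M_eq[OF t], subst M_eq[OF t]) (simp add: int_diff[OF AMc AMc t])
    have "norm (integral {0..t} (\<lambda>s. (A x s o\<^sub>L M x s) - (A x' s o\<^sub>L M x' s))) \<le> (K * (4 * norm (x - x')) + K*S)*t"
    proof (rule int_bound[OF _ t])
      show "continuous_on {0..T} (\<lambda>s. (A x s o\<^sub>L M x s) - (A x' s o\<^sub>L M x' s))" using Ac M_cont by (intro continuous_intros)
      fix s assume "s \<in> {0..t}"
      then have s: "s \<in> {0..T}" using t by auto
      have "(A x s o\<^sub>L M x s) - (A x' s o\<^sub>L M x' s) = ((A x s - A x' s) o\<^sub>L M x s) + ((A x' s o\<^sub>L M x s) - (A x' s o\<^sub>L M x' s))"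
        by (rule blinfun_eqI) (simp add: blinfun.diff_left blinfun.diff_right blinfun.add_left)
      then have "norm ((A x s o\<^sub>L M x s) - (A x' s o\<^sub>L M x' s)) \<le> norm ((A x s - A x' s) o\<^sub>L M x s) + norm ((A x' s o\<^sub>L M x s) - (A x' s o\<^sub>L M x' s))"
        by (metis norm_triangle_ineq)
      also have "\<dots> \<le> norm (A x s - A x' s) * norm (M x s) + norm (A x' s) * norm (M x s - M x' s)"
        by (intro add_mono norm_blinfun_compose comp_lip)
      also have "\<dots> \<le> (K * (2 * norm (x - x'))) * 2 + K * S"
      proof (intro add_mono mult_mono)
        have "norm (A x s - A x' s) \<le> K * norm (Y x s - Y x' s)" unfolding A_def by (rule DBlip[OF s])
        also have "\<dots> \<le> K * (2 * norm (x - x'))" using Y_lip[OF s] K by (intro mult_left_mono) auto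
        finally show "norm (A x s - A x' s) \<le> K * (2 * norm (x - x'))" .
      qed (use M_bound[OF s] Ab[OF s] S[OF s] K in auto)
      finally show "norm ((A x s o\<^sub>L M x s) - (A x' s o\<^sub>L M x' s)) \<le> K * (4 * norm (x - x')) + K * S" by simp
    qed
    also have "\<dots> = (K * (4 * norm (x - x')))*t + (K*S)*t" by (simp add: algebra_simps)
    also have "\<dots> \<le> (4 * norm (x - x'))/2 + S/2" by (intro add_mono KST S0 t) simp
    finally show "norm (M x t - M x' t) \<le> 2 * norm (x - x') + S/2" unfolding eq by simp
  qed (use T in auto)
qed

lemma M_apply: "t \<in> {0..T} \<Longrightarrow> M x t v = v + integral {0..t} (\<lambda>s. A x s (M x s v))"
  by (subst M_eq, assumption) (simp add: blinfun.add_left int_apply[OF AMc])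

lemma Y_rem: "t \<in> {0..T} \<Longrightarrow> norm (Y y t - Y x t - M x t (y - x)) \<le> 2 * (2 * norm (y - x) ^ 2)"
proof -
  assume t: "t \<in> {0..T}"
  let ?h = "y - x"
  show ?thesis
  proof (rule sup_trick[OF _ _ _ t])
    show "continuous_on {0..T} (\<lambda>t. Y y t - Y x t - M x t ?h)" using Y_cont M_cont by (intro continuous_intros)
    fix S t assume S: "\<And>s. s \<in> {0..T} \<Longrightarrow> norm (Y y s - Y x s - M x s ?h) \<le> S" and t: "t \<in> {0..T}"
    have S0: "0 \<le> S" by (rule S_nonneg[OF S])
    have c3: "continuous_on {0..T} (\<lambda>s. A x s (M x s ?h))" using Ac M_cont by (intro continuous_intros)
    have eq: "Y y t - Y x t - M x t ?h = integral {0..t} (\<lambda>s. B (\<xi> s) (Y y s) - B (\<xi> s) (Y x s) - A x s (M x s ?h))"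
    proof -
      have "Y y t - Y x t - M x t ?h = (integral {0..t} (\<lambda>s. B (\<xi> s) (Y y s)) - integral {0..t} (\<lambda>s. B (\<xi> s) (Y x s)))
           - integral {0..t} (\<lambda>s. A x s (M x s ?h))"
        by (subst Y_eq[OF t], subst Y_eq[OF t], subst M_apply[OF t]) simp
      also have "\<dots> = integral {0..t} (\<lambda>s. B (\<xi> s) (Y y s) - B (\<xi> s) (Y x s)) - integral {0..t} (\<lambda>s. A x s (M x s ?h))"
        by (simp add: int_diff[OF BYc BYc t])
      also have "\<dots> = integral {0..t} (\<lambda>s. B (\<xi> s) (Y y s) - B (\<xi> s) (Y x s) - A x s (M x s ?h))"
        by (rule int_diff[OF _ c3 t]) (use BYc Ac M_cont in \<open>intro continuous_intros\<close>)
      finally show ?thesis .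
    qed
    have "norm (integral {0..t} (\<lambda>s. B (\<xi> s) (Y y s) - B (\<xi> s) (Y x s) - A x s (M x s ?h))) \<le> (K * (4 * norm ?h ^ 2) + K*S)*t"
    proof (rule int_bound[OF _ t])
      show "continuous_on {0..T} (\<lambda>s. B (\<xi> s) (Y y s) - B (\<xi> s) (Y x s) - A x s (M x s ?h))"
        using BYc Ac M_cont by (intro continuous_intros)
      fix s assume "s \<in> {0..t}"
      then have s: "s \<in> {0..T}" using t by auto
      let ?r = "B (\<xi> s) (Y y s) - B (\<xi> s) (Y x s) - A x s (Y y s - Y x s)"
      let ?g = "Y y s - Y x s - M x s ?h"
      have "B (\<xi> s) (Y y s) - B (\<xi> s) (Y x s) - A x s (M x s ?h) = ?r + A x s ?g"
      proof -
        have e1: "A x s ?g = A x s (Y y s - Y x s) - A x s (M x s ?h)" by (simp only: blinfun.diff_right)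
        show ?thesis unfolding e1 by (rule grp_id)
      qed
      then have "norm (B (\<xi> s) (Y y s) - B (\<xi> s) (Y x s) - A x s (M x s ?h)) \<le> norm ?r + norm (A x s ?g)"
        by (metis norm_triangle_ineq)
      also have "\<dots> \<le> K * (4 * norm ?h ^ 2) + K * S"
      proof (rule add_mono)
        have "norm ?r \<le> K * norm (Y y s - Y x s) ^ 2" unfolding A_def
          by (rule second_order[where D="DB (\<xi> s)"]) (use Bder[OF s] DBlip[OF s] K in auto)
        also have "\<dots> \<le> K * (2 * norm ?h) ^ 2" using Y_lip[OF s, of y x] K
          by (intro mult_left_mono power_mono) auto
        finally show "norm ?r \<le> K * (4 * norm ?h ^ 2)" by (simp add: power2_eq_square)
        have "norm (A x s ?g) \<le> norm (A x s) * norm ?g" by (rule norm_blinfun)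
        also have "\<dots> \<le> K * S" using Ab[OF s] S[OF s] K by (intro mult_mono) auto
        finally show "norm (A x s ?g) \<le> K * S" .
      qed
      finally show "norm (B (\<xi> s) (Y y s) - B (\<xi> s) (Y x s) - A x s (M x s ?h)) \<le> K * (4 * norm ?h ^ 2) + K * S" .
    qed
    also have "\<dots> = (K * (4 * norm ?h ^ 2))*t + (K*S)*t" by (simp add: algebra_simps)
    also have "\<dots> \<le> (4 * norm ?h ^ 2)/2 + S/2" by (intro add_mono KST S0 t) simp
    finally show "norm (Y y t - Y x t - M x t ?h) \<le> 2 * norm ?h ^ 2 + S/2" unfolding eq by simp
  qed (use T in auto)
qed

lemma Y_deriv: "t \<in> {0..T} \<Longrightarrow> ((\<lambda>x. Y x t) has_derivative blinfun_apply (M x t)) (at x)"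
  unfolding has_derivative_at_alt
proof (intro conjI allI impI)
  assume t: "t \<in> {0..T}"
  show "bounded_linear (blinfun_apply (M x t))" by (rule blinfun.bounded_linear_right)
  fix e :: real assume e: "e > 0"
  show "\<exists>d>0. \<forall>y. norm (y - x) < d \<longrightarrow> norm (Y y t - Y x t - M x t (y - x)) \<le> e * norm (y - x)"
  proof (intro exI[of _ "e/4"] conjI allI impI)
    show "e/4 > 0" using e by simp
    fix y assume y: "norm (y - x) < e/4"
    have "norm (Y y t - Y x t - M x t (y - x)) \<le> 4 * norm (y - x) * norm (y - x)"
      using Y_rem[OF t, of y x] by (simp add: power2_eq_square)
    also have "\<dots> \<le> e * norm (y - x)" using y by (intro mult_right_mono) auto
    finally show "norm (Y y t - Y x t - M x t (y - x)) \<le> e * norm (y - x)" .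
  qed
qed

end


lemma lip_cont:
  fixes f :: "'a::real_normed_vector \<Rightarrow> 'b::real_normed_vector"
  assumes "\<And>x y. norm (f x - f y) \<le> c * norm (x - y)" "0 \<le> c"
  shows "continuous_on UNIV f"
  by (rule lipschitz_on_continuous_on[of c]) (rule lipschitz_onI, use assms in \<open>auto simp: dist_norm\<close>)

context setting begin

lemma is_flow_Y: "is_flow B \<xi> T (\<lambda>t x. Y x t)"
  unfolding is_flow_def
proof (intro allI conjI ballI)
  fix x
  have "Y x 0 = x + integral {0..0} (\<lambda>s. B (\<xi> s) (Y x s))" by (rule Y_eq) (use T in auto)
  then show "Y x 0 = x" by simp
  fix t assume t: "t \<in> {0..T}"
  have "((\<lambda>s. x + integral {0..s} (\<lambda>s. B (\<xi> s) (Y x s))) has_vector_derivative 0 + B (\<xi> t) (Y x t)) (at t within {0..T})"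
    by (rule has_vector_derivative_add[OF has_vector_derivative_const integral_has_vector_derivative[OF BYc t]])
  then have "((\<lambda>s. x + integral {0..s} (\<lambda>s. B (\<xi> s) (Y x s))) has_vector_derivative B (\<xi> t) (Y x t)) (at t within {0..T})"
    by simp
  then show "((\<lambda>s. Y x s) has_vector_derivative B (\<xi> t) (Y x t)) (at t within {0..T})"
    by (rule has_vector_derivative_transform[OF t, rotated]) (rule Y_eq)
qed

lemma flow_eq: "t \<in> {0..T} \<Longrightarrow> flow B \<xi> T t x = Y x t"
proof -
  assume t: "t \<in> {0..T}"
  let ?p = "flow B \<xi> T"
  have fl: "is_flow B \<xi> T ?p" unfolding flow_def by (rule someI[where P="is_flow B \<xi> T", OF is_flow_Y])
  have d: "\<And>s. s \<in> {0..T} \<Longrightarrow> ((\<lambda>s. ?p s x) has_vector_derivative B (\<xi> s) (?p s x)) (at s within {0..T})"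
    and p0: "?p 0 x = x" using fl unfolding is_flow_def by auto
  have pc: "continuous_on {0..T} (\<lambda>s. ?p s x)"
    unfolding continuous_on_eq_continuous_within using d by (blast intro: has_vector_derivative_continuous)
  have peq: "?p t x = x + integral {0..t} (\<lambda>s. B (\<xi> s) (?p s x))" if t: "t \<in> {0..T}" for t
  proof -
    have "((\<lambda>s. B (\<xi> s) (?p s x)) has_integral ?p t x - ?p 0 x) {0..t}"
    proof (rule fundamental_theorem_of_calculus)
      show "0 \<le> t" using t by simp
      fix s assume s: "s \<in> {0..t}"
      then have s': "s \<in> {0..T}" using t by auto
      show "((\<lambda>s. ?p s x) has_vector_derivative B (\<xi> s) (?p s x)) (at s within {0..t})"
        by (rule has_vector_derivative_within_subset[OF d[OF s']]) (use t in auto)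
    qed
    then have "integral {0..t} (\<lambda>s. B (\<xi> s) (?p s x)) = ?p t x - x" unfolding p0 by (rule integral_unique)
    then show ?thesis by simp
  qed
  show ?thesis by (rule Y_unique[OF pc peq t])
qed

definition "PF t \<theta> = (\<lambda>x. adjoint (blinfun_apply (M x t)) (apply_bcontfun \<theta> (Y x t)))"

lemma jac: "t \<in> {0..T} \<Longrightarrow> transpose (jacobian (flow B \<xi> T t) (at x)) *v w = adjoint (blinfun_apply (M x t)) w"
proof -
  assume t: "t \<in> {0..T}"
  have "flow B \<xi> T t = (\<lambda>x. Y x t)" using flow_eq[OF t] by auto
  then have J: "jacobian (flow B \<xi> T t) (at x) = matrix (blinfun_apply (M x t))"
    unfolding jacobian_def using frechet_derivative_at[OF Y_deriv[OF t]] by simp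
  show ?thesis unfolding J by (rule transp_jac)
qed

end

context setting begin

lemma PF_norm: "t \<in> {0..T} \<Longrightarrow> norm (PF t \<theta> x) \<le> 2 * norm \<theta>"
proof -
  assume t: "t \<in> {0..T}"
  have "norm (PF t \<theta> x) \<le> norm (M x t) * norm (apply_bcontfun \<theta> (Y x t))" unfolding PF_def by (rule adj_bl_norm)
  also have "\<dots> \<le> 2 * norm \<theta>" using M_bound[OF t] by (intro mult_mono norm_bounded) auto
  finally show ?thesis .
qed

lemma PF_bcont: "t \<in> {0..T} \<Longrightarrow> PF t \<theta> \<in> bcontfun"
proof -
  assume t: "t \<in> {0..T}"
  have cM: "continuous_on UNIV (\<lambda>x. M x t)" by (rule lip_cont[of _ 4]) (use M_lip[OF t] in auto)
  have cY: "continuous_on UNIV (\<lambda>x. Y x t)" by (rule lip_cont[of _ 2]) (use Y_lip[OF t] in auto)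
  have cth: "continuous_on UNIV (\<lambda>x. apply_bcontfun \<theta> (Y x t))"
    by (rule continuous_on_compose2[OF continuous_on_apply_bcontfun cY]) auto
  have "continuous_on UNIV (PF t \<theta>)"
    unfolding PF_def adj_bl
    by (intro continuous_on_vec_lambda continuous_intros cM cth)
  moreover have "bounded (range (PF t \<theta>))"
    unfolding bounded_iff using PF_norm[OF t] by blast
  ultimately show ?thesis unfolding bcontfun_def by auto
qed

lemma push_field_eq: "t \<in> {0..T} \<Longrightarrow> push_field (flow B \<xi> T t) \<theta> = Bcontfun (PF t \<theta>)"
  unfolding push_field_def PF_def by (simp only: jac flow_eq)

lemma PF_apply: "t \<in> {0..T} \<Longrightarrow> apply_bcontfun (push_field (flow B \<xi> T t) \<theta>) = PF t \<theta>"
  using push_field_eq PF_bcont Bcontfun_inverse by metis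

lemma push_bl: "t \<in> {0..T} \<Longrightarrow> bounded_linear (\<lambda>\<theta>. blinfun_apply \<xi>0 (push_field (flow B \<xi> T t) \<theta>))"
proof -
  assume t: "t \<in> {0..T}"
  have add: "push_field (flow B \<xi> T t) (a + b) = push_field (flow B \<xi> T t) a + push_field (flow B \<xi> T t) b" for a b
    by (rule bcontfun_eqI) (simp add: PF_apply[OF t] plus_bcontfun.rep_eq PF_def adj_bl_add)
  have sc: "push_field (flow B \<xi> T t) (r *\<^sub>R a) = r *\<^sub>R push_field (flow B \<xi> T t) a" for r a
    by (rule bcontfun_eqI) (simp add: PF_apply[OF t] scaleR_bcontfun.rep_eq PF_def adj_bl_scale)
  have nb: "norm (push_field (flow B \<xi> T t) a) \<le> 2 * norm a" for a
    by (rule norm_bound) (simp add: PF_apply[OF t] PF_norm[OF t])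
  show ?thesis
  proof (rule bounded_linear_intro[where K="2 * norm \<xi>0"])
    fix a
    have "norm (blinfun_apply \<xi>0 (push_field (flow B \<xi> T t) a)) \<le> norm \<xi>0 * norm (push_field (flow B \<xi> T t) a)"
      by (rule norm_blinfun)
    also have "\<dots> \<le> norm \<xi>0 * (2 * norm a)" using nb by (intro mult_left_mono) auto
    finally show "norm (blinfun_apply \<xi>0 (push_field (flow B \<xi> T t) a)) \<le> norm a * (2 * norm \<xi>0)" by (simp add: algebra_simps)
  qed (simp_all add: add sc blinfun.add_right blinfun.scaleR_right)
qed

lemma Gamma_apply: "t \<in> {0..T} \<Longrightarrow> blinfun_apply (Gamma B T \<xi>0 \<xi> t) \<theta> = blinfun_apply \<xi>0 (push_field (flow B \<xi> T t) \<theta>)"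
proof -
  assume t: "t \<in> {0..T}"
  show ?thesis unfolding Gamma_def push_meas_def bounded_linear_Blinfun_apply[OF push_bl[OF t]] ..
qed

lemma Gamma_norm: "t \<in> {0..T} \<Longrightarrow> norm (Gamma B T \<xi>0 \<xi> t) \<le> 2 * norm \<xi>0"
proof -
  assume t: "t \<in> {0..T}"
  show ?thesis
  proof (rule norm_blinfun_bound)
    fix \<theta>
    have "norm (blinfun_apply \<xi>0 (push_field (flow B \<xi> T t) \<theta>)) \<le> norm \<xi>0 * norm (push_field (flow B \<xi> T t) \<theta>)"
      by (rule norm_blinfun)
    also have "\<dots> \<le> norm \<xi>0 * (2 * norm \<theta>)"
      by (intro mult_left_mono norm_bound) (simp_all add: PF_apply[OF t] PF_norm[OF t])
    finally show "norm (blinfun_apply (Gamma B T \<xi>0 \<xi> t) \<theta>) \<le> 2 * norm \<xi>0 * norm \<theta>"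
      by (simp add: Gamma_apply[OF t] algebra_simps)
  qed simp
qed

end


lemma weak_set_ne: "(0::(real^'d::finite) \<Rightarrow>\<^sub>C (real^'d)) \<in> {\<theta>. \<exists>L. L-lipschitz_on UNIV (apply_bcontfun \<theta>) \<and> norm \<theta> + L \<le> 1}"
  by (auto intro!: exI[of _ 0] lipschitz_onI simp: zero_bcontfun.rep_eq)

lemma weak_norm_bound:
  fixes \<eta> :: "('d::finite) meas"
  assumes "\<And>\<theta> L. L-lipschitz_on UNIV (apply_bcontfun \<theta>) \<Longrightarrow> norm \<theta> + L \<le> 1 \<Longrightarrow> blinfun_apply \<eta> \<theta> \<le> c"
  shows "weak_norm \<eta> \<le> c"
  unfolding weak_norm_def
proof (rule cSUP_least)
  fix \<theta> :: "(real^'d) \<Rightarrow>\<^sub>C (real^'d)" assume "\<theta> \<in> {\<theta>. \<exists>L. L-lipschitz_on UNIV (apply_bcontfun \<theta>) \<and> norm \<theta> + L \<le> 1}"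
  then obtain L where "L-lipschitz_on UNIV (apply_bcontfun \<theta>)" "norm \<theta> + L \<le> 1" by auto
  then show "blinfun_apply \<eta> \<theta> \<le> c" by (rule assms)
qed (use weak_set_ne in blast)

lemma weak_norm_le: "weak_norm (\<eta> :: ('d::finite) meas) \<le> norm \<eta>"
proof (rule weak_norm_bound)
  fix \<theta> :: "(real^'d) \<Rightarrow>\<^sub>C (real^'d)" and L assume L: "L-lipschitz_on UNIV (apply_bcontfun \<theta>)" "norm \<theta> + L \<le> 1"
  have "norm \<theta> \<le> 1" using lipschitz_on_nonneg[OF L(1)] L(2) by simp
  have "blinfun_apply \<eta> \<theta> \<le> norm (blinfun_apply \<eta> \<theta>)" by simp
  also have "\<dots> \<le> norm \<eta> * norm \<theta>" by (rule norm_blinfun)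
  also have "\<dots> \<le> norm \<eta> * 1" using \<open>norm \<theta> \<le> 1\<close> by (intro mult_left_mono) auto
  finally show "blinfun_apply \<eta> \<theta> \<le> norm \<eta>" by simp
qed

context setting begin

lemma PF_diff:
  assumes s: "s \<in> {0..T}" and t: "t \<in> {0..T}" and L: "L-lipschitz_on UNIV (apply_bcontfun \<theta>)" "norm \<theta> + L \<le> 1"
  shows "norm (PF s \<theta> x - PF t \<theta> x) \<le> (2*K) * \<bar>s - t\<bar>"
proof -
  let ?ws = "apply_bcontfun \<theta> (Y x s)" and ?wt = "apply_bcontfun \<theta> (Y x t)"
  have L0: "0 \<le> L" using lipschitz_on_nonneg[OF L(1)] .
  have "PF s \<theta> x - PF t \<theta> x = (adjoint (blinfun_apply (M x s)) ?ws - adjoint (blinfun_apply (M x t)) ?ws)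
      + (adjoint (blinfun_apply (M x t)) ?ws - adjoint (blinfun_apply (M x t)) ?wt)"
    unfolding PF_def by simp
  also have "\<dots> = adjoint (blinfun_apply (M x s - M x t)) ?ws + adjoint (blinfun_apply (M x t)) (?ws - ?wt)"
    by (simp only: adj_bl_diff adj_bl_minus)
  finally have eq: "PF s \<theta> x - PF t \<theta> x = adjoint (blinfun_apply (M x s - M x t)) ?ws + adjoint (blinfun_apply (M x t)) (?ws - ?wt)" .
  have "norm (PF s \<theta> x - PF t \<theta> x) \<le> norm (M x s - M x t) * norm ?ws + norm (M x t) * norm (?ws - ?wt)"
    unfolding eq by (rule order_trans[OF norm_triangle_ineq add_mono[OF adj_bl_norm adj_bl_norm]])
  also have "\<dots> \<le> ((2*K) * \<bar>s - t\<bar>) * norm \<theta> + 2 * (L * (K * \<bar>s - t\<bar>))"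
  proof (rule add_mono)
    show "norm (M x s - M x t) * norm ?ws \<le> ((2*K) * \<bar>s - t\<bar>) * norm \<theta>"
      using M_speed[OF t s] K by (intro mult_mono norm_bounded) auto
    have "norm (?ws - ?wt) \<le> L * dist (Y x s) (Y x t)"
      using lipschitz_onD[OF L(1), of "Y x s" "Y x t"] by (simp add: dist_norm)
    also have "\<dots> \<le> L * (K * \<bar>s - t\<bar>)" using Y_speed[OF t s] L0 by (intro mult_left_mono) (auto simp: dist_norm)
    finally show "norm (M x t) * norm (?ws - ?wt) \<le> 2 * (L * (K * \<bar>s - t\<bar>))"
      using M_bound[OF t] by (intro mult_mono) auto
  qed
  also have "\<dots> = ((2*K) * \<bar>s - t\<bar>) * (norm \<theta> + L)" by (simp add: algebra_simps)
  also have "\<dots> \<le> ((2*K) * \<bar>s - t\<bar>) * 1" using L(2) K by (intro mult_left_mono) auto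
  finally show ?thesis by simp
qed

lemma Gamma_speed:
  assumes s: "s \<in> {0..T}" and t: "t \<in> {0..T}"
  shows "weak_norm (Gamma B T \<xi>0 \<xi> s - Gamma B T \<xi>0 \<xi> t) \<le> (norm \<xi>0 * (2*K)) * \<bar>s - t\<bar>"
proof (rule weak_norm_bound)
  fix \<theta> :: "(real^'d) \<Rightarrow>\<^sub>C (real^'d)" and L :: real
  assume L: "L-lipschitz_on UNIV (apply_bcontfun \<theta>)" "norm \<theta> + L \<le> 1"
  let ?d = "push_field (flow B \<xi> T s) \<theta> - push_field (flow B \<xi> T t) \<theta>"
  have "blinfun_apply (Gamma B T \<xi>0 \<xi> s - Gamma B T \<xi>0 \<xi> t) \<theta> = blinfun_apply \<xi>0 ?d"
    by (simp add: blinfun.diff_left Gamma_apply[OF s] Gamma_apply[OF t] blinfun.diff_right)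
  also have "\<dots> \<le> norm (blinfun_apply \<xi>0 ?d)" by simp
  also have "\<dots> \<le> norm \<xi>0 * norm ?d" by (rule norm_blinfun)
  also have "\<dots> \<le> norm \<xi>0 * ((2*K) * \<bar>s - t\<bar>)"
  proof (intro mult_left_mono norm_bound)
    fix x
    show "norm (apply_bcontfun ?d x) \<le> (2*K) * \<bar>s - t\<bar>"
      by (simp add: minus_bcontfun.rep_eq PF_apply[OF s] PF_apply[OF t] PF_diff[OF s t L])
  qed simp
  finally show "blinfun_apply (Gamma B T \<xi>0 \<xi> s - Gamma B T \<xi>0 \<xi> t) \<theta> \<le> (norm \<xi>0 * (2*K)) * \<bar>s - t\<bar>"
    by (simp add: algebra_simps)
qed

lemma Gamma_weak_cont: "weak_cont T (Gamma B T \<xi>0 \<xi>)"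
  unfolding weak_cont_def
proof (intro ballI allI impI)
  fix t e assume t: "t \<in> {0..T}" and e: "(0::real) < e"
  let ?c = "norm \<xi>0 * (2*K)"
  have c: "0 \<le> ?c" using K by simp
  show "\<exists>d>0. \<forall>s\<in>{0..T}. \<bar>s - t\<bar> < d \<longrightarrow> weak_norm (Gamma B T \<xi>0 \<xi> s - Gamma B T \<xi>0 \<xi> t) < e"
  proof (intro exI[of _ "e / (?c + 1)"] conjI ballI impI)
    have c1: "0 < ?c + 1" using c by linarith
    show "e / (?c + 1) > 0" using divide_pos_pos[OF e c1] .
    fix s assume s: "s \<in> {0..T}" and d: "\<bar>s - t\<bar> < e / (?c + 1)"
    have "?c * \<bar>s - t\<bar> \<le> ?c * (e / (?c + 1))" using d c by (intro mult_left_mono) auto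
    also have "\<dots> < e" using c e by (simp add: field_simps)
    finally show "weak_norm (Gamma B T \<xi>0 \<xi> s - Gamma B T \<xi>0 \<xi> t) < e"
      using Gamma_speed[OF s t, of \<xi>0] by linarith
  qed
qed

end


lemma supn_le:
  fixes f :: "real^'d::finite \<Rightarrow> 'b::real_normed_vector"
  assumes "bounded (range f)" shows "norm (f x) \<le> supn f"
proof -
  have "bounded (range (\<lambda>x. norm (f x)))" using assms by (simp add: bounded_norm_comp image_image[symmetric])
  then have "bdd_above (range (\<lambda>x. norm (f x)))" by (rule bounded_imp_bdd_above)
  then show ?thesis unfolding supn_def by (intro cSUP_upper) auto
qed

lemma supn_nonneg:
  fixes f :: "real^'d::finite \<Rightarrow> 'b::real_normed_vector"
  assumes "bounded (range f)" shows "0 \<le> supn f"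
  using supn_le[OF assms, of 0] norm_ge_zero[of "f 0"] by linarith

lemma bounded_diff_range:
  fixes f g :: "'a \<Rightarrow> 'b::real_normed_vector"
  assumes "bounded (range f)" "bounded (range g)"
  shows "bounded (range (\<lambda>x. f x - g x))"
proof -
  obtain a where a: "\<forall>y\<in>range f. norm y \<le> a" using assms(1) unfolding bounded_iff by blast
  obtain b where b: "\<forall>y\<in>range g. norm y \<le> b" using assms(2) unfolding bounded_iff by blast
  have "norm (f x - g x) \<le> a + b" for x
  proof -
    have "norm (f x) \<le> a" "norm (g x) \<le> b" using a b by auto
    then show ?thesis using norm_triangle_ineq4[of "f x" "g x"] by linarith
  qed
  then show ?thesis unfolding bounded_iff by blast
qed

lemma key:
  fixes B :: "('d::finite) meas \<Rightarrow> real^'d \<Rightarrow> real^'d"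
    and DB :: "'d meas \<Rightarrow> real^'d \<Rightarrow> ((real^'d) \<Rightarrow>\<^sub>L (real^'d))"
    and D2B :: "'d meas \<Rightarrow> real^'d \<Rightarrow> ((real^'d) \<Rightarrow>\<^sub>L ((real^'d) \<Rightarrow>\<^sub>L (real^'d)))"
  assumes CB: "CB > 0"
    and der1: "\<forall>\<xi> x. (B \<xi> has_derivative blinfun_apply (DB \<xi> x)) (at x)"
    and der2: "\<forall>\<xi> x. (DB \<xi> has_derivative blinfun_apply (D2B \<xi> x)) (at x)"
    and bd: "\<forall>\<xi>. bounded (range (B \<xi>)) \<and> bounded (range (DB \<xi>)) \<and> bounded (range (D2B \<xi>))"
    and sb: "\<forall>\<xi>. supn (B \<xi>) + supn (DB \<xi>) + supn (D2B \<xi>) \<le> CB * (weak_norm \<xi> + 1)"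
    and lb: "\<forall>\<xi> \<xi>'. supn (\<lambda>x. B \<xi> x - B \<xi>' x) \<le> CB * weak_norm (\<xi> - \<xi>')"
    and ldb: "\<forall>\<xi> \<xi>'. supn (\<lambda>x. DB \<xi> x - DB \<xi>' x) \<le> CB * weak_norm (\<xi> - \<xi>')"
    and Kdef: "K = CB * (\<bar>R\<bar> + 1)" and Tdef: "T = 1 / (2 * K)"
    and wc: "weak_cont T \<xi>" and wb: "\<forall>t\<in>{0..T}. weak_norm (\<xi> t) \<le> R"
  shows "weak_cont T (Gamma B T \<xi>0 \<xi>) \<and> (\<forall>t\<in>{0..T}. norm (Gamma B T \<xi>0 \<xi> t) \<le> 2 * norm \<xi>0)"
proof -
  have K: "0 < K" using CB Kdef by simp
  have T: "0 < T" using K Tdef by simp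
  have KT: "K * T \<le> 1/2" using K Tdef by simp
  have sn: "0 \<le> supn (B z)" "0 \<le> supn (DB z)" "0 \<le> supn (D2B z)" for z using bd by (auto intro: supn_nonneg)
  have wR: "weak_norm (\<xi> s) \<le> \<bar>R\<bar>" if "s \<in> {0..T}" for s using wb that by force
  have sK: "CB * (weak_norm (\<xi> s) + 1) \<le> K" if "s \<in> {0..T}" for s
    unfolding Kdef using wR[OF that] CB by (intro mult_left_mono) auto
  have Bb: "norm (B (\<xi> s) x) \<le> K" if "s \<in> {0..T}" for s x
    using supn_le[of "B (\<xi> s)" x] bd sb[rule_format, of "\<xi> s"] sn[of "\<xi> s"] sK[OF that] by force
  have DBb: "norm (DB (\<xi> s) x) \<le> K" if "s \<in> {0..T}" for s x
    using supn_le[of "DB (\<xi> s)" x] bd sb[rule_format, of "\<xi> s"] sn[of "\<xi> s"] sK[OF that] by force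
  have D2Bb: "norm (D2B (\<xi> s) x) \<le> K" if "s \<in> {0..T}" for s x
    using supn_le[of "D2B (\<xi> s)" x] bd sb[rule_format, of "\<xi> s"] sn[of "\<xi> s"] sK[OF that] by force
  have Blip: "norm (B (\<xi> s) x - B (\<xi> s) y) \<le> K * norm (x - y)" if s: "s \<in> {0..T}" for s x y
    by (rule differentiable_bound[where S=UNIV and f'="\<lambda>x. blinfun_apply (DB (\<xi> s) x)"])
      (use der1 DBb[OF s] in \<open>auto simp: norm_blinfun.rep_eq[symmetric]\<close>)
  have DBlip: "norm (DB (\<xi> s) x - DB (\<xi> s) y) \<le> K * norm (x - y)" if s: "s \<in> {0..T}" for s x y
    by (rule differentiable_bound[where S=UNIV and f'="\<lambda>x. blinfun_apply (D2B (\<xi> s) x)"])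
      (use der2 D2Bb[OF s] in \<open>auto simp: norm_blinfun.rep_eq[symmetric]\<close>)
  have Buc: "\<exists>d>0. \<forall>s\<in>{0..T}. \<bar>s - s0\<bar> < d \<longrightarrow> (\<forall>u. norm (B (\<xi> s) u - B (\<xi> s0) u) \<le> e)"
    if s0: "s0 \<in> {0..T}" and e: "e > 0" for s0 e
  proof -
    obtain d where d: "d > 0" "\<forall>s\<in>{0..T}. \<bar>s - s0\<bar> < d \<longrightarrow> weak_norm (\<xi> s - \<xi> s0) < e / CB"
    proof -
      have "e/CB > 0" using e CB by simp
      then show ?thesis using wc s0 that unfolding weak_cont_def by blast
    qed
    show ?thesis
    proof (intro exI[of _ d] conjI ballI impI allI)
      fix s u assume s: "s \<in> {0..T}" "\<bar>s - s0\<bar> < d"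
      have "norm (B (\<xi> s) u - B (\<xi> s0) u) \<le> supn (\<lambda>x. B (\<xi> s) x - B (\<xi> s0) x)"
        by (rule supn_le, rule bounded_diff_range) (use bd in blast)+
      also have "\<dots> \<le> CB * weak_norm (\<xi> s - \<xi> s0)" by (rule lb[rule_format])
      also have "\<dots> \<le> CB * (e / CB)" using d s CB by (intro mult_left_mono) auto
      also have "\<dots> = e" using CB by simp
      finally show "norm (B (\<xi> s) u - B (\<xi> s0) u) \<le> e" .
    qed (use d in auto)
  qed
  have DBuc: "\<exists>d>0. \<forall>s\<in>{0..T}. \<bar>s - s0\<bar> < d \<longrightarrow> (\<forall>u. norm (DB (\<xi> s) u - DB (\<xi> s0) u) \<le> e)"
    if s0: "s0 \<in> {0..T}" and e: "e > 0" for s0 e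
  proof -
    obtain d where d: "d > 0" "\<forall>s\<in>{0..T}. \<bar>s - s0\<bar> < d \<longrightarrow> weak_norm (\<xi> s - \<xi> s0) < e / CB"
    proof -
      have "e/CB > 0" using e CB by simp
      then show ?thesis using wc s0 that unfolding weak_cont_def by blast
    qed
    show ?thesis
    proof (intro exI[of _ d] conjI ballI impI allI)
      fix s u assume s: "s \<in> {0..T}" "\<bar>s - s0\<bar> < d"
      have "norm (DB (\<xi> s) u - DB (\<xi> s0) u) \<le> supn (\<lambda>x. DB (\<xi> s) x - DB (\<xi> s0) x)"
        by (rule supn_le, rule bounded_diff_range) (use bd in blast)+
      also have "\<dots> \<le> CB * weak_norm (\<xi> s - \<xi> s0)" by (rule ldb[rule_format])
      also have "\<dots> \<le> CB * (e / CB)" using d s CB by (intro mult_left_mono) auto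
      also have "\<dots> = e" using CB by simp
      finally show "norm (DB (\<xi> s) u - DB (\<xi> s0) u) \<le> e" .
    qed (use d in auto)
  qed
  interpret setting B DB \<xi> K T
    by unfold_locales (fact K, fact T, fact KT, erule Bb, erule DBb, erule Blip, erule DBlip,
      rule der1[rule_format], erule (1) Buc, erule (1) DBuc)
  show ?thesis using Gamma_weak_cont Gamma_norm by blast
qed


theorem lemma3p3:
  fixes B :: "('d::finite) meas \<Rightarrow> real^'d \<Rightarrow> real^'d"
  assumes "standing B"
  shows "\<forall>R. \<exists>T>0. \<forall>\<xi>0 :: 'd meas. R = 2 * norm \<xi>0 \<longrightarrow>
           (\<forall>\<xi>. ball_strong T R \<xi> \<longrightarrow> ball_strong T R (Gamma B T \<xi>0 \<xi>)) \<and>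
           (\<forall>\<xi>. ball_weak T R \<xi> \<longrightarrow> ball_weak T R (Gamma B T \<xi>0 \<xi>))"
proof
  fix R :: real
  obtain CB DB D2B where CB: "CB > 0"
    and der1: "\<forall>\<xi> x. (B \<xi> has_derivative blinfun_apply (DB \<xi> x)) (at x)"
    and der2: "\<forall>\<xi> x. (DB \<xi> has_derivative blinfun_apply (D2B \<xi> x)) (at x)"
    and bd: "\<forall>\<xi>. bounded (range (B \<xi>)) \<and> bounded (range (DB \<xi>)) \<and> bounded (range (D2B \<xi>))"
    and sb: "\<forall>\<xi>. supn (B \<xi>) + supn (DB \<xi>) + supn (D2B \<xi>) \<le> CB * (weak_norm \<xi> + 1)"
    and lb: "\<forall>\<xi> \<xi>'. supn (\<lambda>x. B \<xi> x - B \<xi>' x) \<le> CB * weak_norm (\<xi> - \<xi>')"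
    and ldb: "\<forall>\<xi> \<xi>'. supn (\<lambda>x. DB \<xi> x - DB \<xi>' x) \<le> CB * weak_norm (\<xi> - \<xi>')"
    using assms unfolding standing_def by blast
  define K where "K = CB * (\<bar>R\<bar> + 1)"
  define T where "T = 1 / (2 * K)"
  have T: "T > 0" using CB unfolding T_def K_def by simp
  note key' = key[OF CB der1 der2 bd sb lb ldb K_def T_def]
  show "\<exists>T>0. \<forall>\<xi>0 :: 'd meas. R = 2 * norm \<xi>0 \<longrightarrow>
           (\<forall>\<xi>. ball_strong T R \<xi> \<longrightarrow> ball_strong T R (Gamma B T \<xi>0 \<xi>)) \<and>
           (\<forall>\<xi>. ball_weak T R \<xi> \<longrightarrow> ball_weak T R (Gamma B T \<xi>0 \<xi>))"
  proof (intro exI[of _ T] conjI allI impI T)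
    fix \<xi>0 :: "'d meas" and \<xi> :: "real \<Rightarrow> 'd meas" assume R: "R = 2 * norm \<xi>0"
    {
      assume b: "ball_strong T R \<xi>"
      have "\<forall>t\<in>{0..T}. weak_norm (\<xi> t) \<le> R" using b unfolding ball_strong_def
        by (meson weak_norm_le order_trans)
      then have "weak_cont T (Gamma B T \<xi>0 \<xi>) \<and> (\<forall>t\<in>{0..T}. norm (Gamma B T \<xi>0 \<xi> t) \<le> 2 * norm \<xi>0)"
        using b unfolding ball_strong_def by (intro key') auto
      then show "ball_strong T R (Gamma B T \<xi>0 \<xi>)" unfolding ball_strong_def R by blast
    }
    {
      assume b: "ball_weak T R \<xi>"
      have "weak_cont T (Gamma B T \<xi>0 \<xi>) \<and> (\<forall>t\<in>{0..T}. norm (Gamma B T \<xi>0 \<xi> t) \<le> 2 * norm \<xi>0)"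
        using b unfolding ball_weak_def by (intro key') auto
      then show "ball_weak T R (Gamma B T \<xi>0 \<xi>)" unfolding ball_weak_def R
        by (meson weak_norm_le order_trans)
    }
  qed
qed
end
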